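(* Let $S\subseteq 2^E$ be a powerful set and $e\in E$. Then $|S/e|=|S|/2^{r_S(\{e\})}$. If moreover $e$ is deletable, then $|S\setminus e|=\frac12|S|$ if $e$ is a coloop of $S$, and $|S\setminus e|=|S|$ otherwise.
   Context: A set $S\subseteq 2^E$ ($E$ finite) is powerful if for every $X\subseteq E$ the number of members of $S$ contained in $X$ is a power of 2. Its rank function is $r_S(X)=\log_2\big(|S|/|\{Y\in S:Y\subseteq E\setminus X\}|\big)$. The contraction is $S/e=\{X\subseteq E\setminus\{e\}: X\in S\}$. Let $f$ be the $\{0,1\}$-valued indicator function of $S$ and $g(X)=f(X)+f(X\cup\{e\})$ for $X\subseteq E\setminus\{e\}$. The element $e$ is deletable if $\frac{1}{g(\emptyset)}g$ is $\{0,1\}$-valued (i.e. the multiset deletion of $e$ is, up to scaling, a powerful set); in that case $S\setminus e=\{X\subseteq E\setminus\{e\}: X\in S \text{ or } X\cup\{e\}\in S\}$. An element $e$ is a coloop of $S$ if there exists $T\subseteq 2^{E\setminus\{e\}}$ with $S=\{X,X\cup\{e\}:X\in T\}$. *)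

theory Defs
  imports Complex_Main
begin

definition powerful :: "'a set \<Rightarrow> 'a set set \<Rightarrow> bool" where
  "powerful E S \<longleftrightarrow> finite E \<and> S \<subseteq> Pow E \<and>
     (\<forall>X. X \<subseteq> E \<longrightarrow> (\<exists>k::nat. card {Y \<in> S. Y \<subseteq> X} = 2 ^ k))"

definition rank_ps :: "'a set \<Rightarrow> 'a set set \<Rightarrow> 'a set \<Rightarrow> real" where
  "rank_ps E S X = log 2 (real (card S) / real (card {Y \<in> S. Y \<subseteq> E - X}))"

definition contraction :: "'a set \<Rightarrow> 'a set set \<Rightarrow> 'a \<Rightarrow> 'a set set" where
  "contraction E S e = {X. X \<subseteq> E - {e} \<and> X \<in> S}"

text \<open>Indicator function of S and the multiset deletion g.\<close>
definition ind_ps :: "'a set set \<Rightarrow> 'a set \<Rightarrow> nat" where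
  "ind_ps S X = (if X \<in> S then 1 else 0)"

definition del_g :: "'a set set \<Rightarrow> 'a \<Rightarrow> 'a set \<Rightarrow> nat" where
  "del_g S e X = ind_ps S X + ind_ps S (X \<union> {e})"

definition deletable :: "'a set \<Rightarrow> 'a set set \<Rightarrow> 'a \<Rightarrow> bool" where
  "deletable E S e \<longleftrightarrow>
     (\<forall>X. X \<subseteq> E - {e} \<longrightarrow>
        real (del_g S e X) / real (del_g S e {}) \<in> {0, 1})"

definition deletion :: "'a set \<Rightarrow> 'a set set \<Rightarrow> 'a \<Rightarrow> 'a set set" where
  "deletion E S e = {X. X \<subseteq> E - {e} \<and> (X \<in> S \<or> X \<union> {e} \<in> S)}"

definition coloop :: "'a set \<Rightarrow> 'a set set \<Rightarrow> 'a \<Rightarrow> bool" where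
  "coloop E S e \<longleftrightarrow> (\<exists>T. T \<subseteq> Pow (E - {e}) \<and>
      S = {Z. \<exists>X\<in>T. Z = X \<or> Z = X \<union> {e}})"

end

theory Submission
  imports Defs
begin

theorem proposition4:
  fixes E :: "'a set" and S :: "'a set set" and e :: 'a
  assumes "powerful E S" and "e \<in> E"
  shows "real (card (contraction E S e)) = real (card S) / 2 powr (rank_ps E S {e}) \<and>
         (deletable E S e \<longrightarrow>
           (coloop E S e \<longrightarrow> real (card (deletion E S e)) = real (card S) / 2) \<and>
           (\<not> coloop E S e \<longrightarrow> card (deletion E S e) = card S))"
proof -
  have fE: "finite E" and SE: "S \<subseteq> Pow E"
    and pw: "\<And>X. X \<subseteq> E \<Longrightarrow> \<exists>k::nat. card {Y \<in> S. Y \<subseteq> X} = 2 ^ k"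
    using assms(1) unfolding powerful_def by auto
  have fS: "finite S" using finite_subset[OF SE] fE by simp
  have emp: "{} \<in> S"
  proof -
    obtain k::nat where k: "card {Y \<in> S. Y \<subseteq> {}} = 2 ^ k" using pw[of "{}"] by auto
    hence "card {Y \<in> S. Y \<subseteq> {}} \<noteq> 0" by simp
    hence "{Y \<in> S. Y \<subseteq> {}} \<noteq> {}" by (metis card.empty)
    thus ?thesis by auto
  qed
  define S0 where "S0 = {Y \<in> S. e \<notin> Y}"
  define S1 where "S1 = {Y \<in> S. e \<in> Y}"
  have C: "contraction E S e = S0" using SE unfolding contraction_def S0_def by auto
  have C2: "{Y \<in> S. Y \<subseteq> E - {e}} = S0" using SE unfolding S0_def by auto
  have fS0: "finite S0" "finite S1" using fS unfolding S0_def S1_def by auto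
  have S01: "S = S0 \<union> S1" "S0 \<inter> S1 = {}" unfolding S0_def S1_def by auto
  have cS: "card S = card S0 + card S1" unfolding S01(1) using S01(2) fS0 by (simp add: card_Un_disjoint)
  have c0: "card S0 > 0" using emp fS0 unfolding S0_def by (auto simp: card_gt_0_iff)
  have part1: "real (card (contraction E S e)) = real (card S) / 2 powr (rank_ps E S {e})"
  proof -
    have pos: "real (card S) / real (card S0) > 0" using c0 cS by auto
    have "2 powr (rank_ps E S {e}) = real (card S) / real (card S0)"
      unfolding rank_ps_def C2 using pos by simp
    thus ?thesis using C c0 cS by (simp add: field_simps)
  qed
  have inj: "inj_on (\<lambda>Y. Y - {e}) S1" unfolding S1_def inj_on_def by blast
  have D: "deletion E S e = S0 \<union> (\<lambda>Y. Y - {e}) ` S1"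
  proof
    show "deletion E S e \<subseteq> S0 \<union> (\<lambda>Y. Y - {e}) ` S1"
    proof
      fix X assume "X \<in> deletion E S e"
      hence X: "X \<subseteq> E - {e}" "X \<in> S \<or> X \<union> {e} \<in> S" unfolding deletion_def by auto
      show "X \<in> S0 \<union> (\<lambda>Y. Y - {e}) ` S1"
      proof (cases "X \<in> S")
        case True thus ?thesis using X unfolding S0_def by auto
      next
        case False
        hence "X \<union> {e} \<in> S1" using X unfolding S1_def by auto
        moreover have "X = (X \<union> {e}) - {e}" using X by auto
        ultimately show ?thesis by blast
      qed
    qed
  next
    show "S0 \<union> (\<lambda>Y. Y - {e}) ` S1 \<subseteq> deletion E S e"
    proof
      fix X assume "X \<in> S0 \<union> (\<lambda>Y. Y - {e}) ` S1"
      thus "X \<in> deletion E S e"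
      proof
        assume "X \<in> S0" thus ?thesis using SE unfolding S0_def deletion_def by auto
      next
        assume "X \<in> (\<lambda>Y. Y - {e}) ` S1"
        then obtain Y where Y: "Y \<in> S1" "X = Y - {e}" by auto
        hence "X \<union> {e} = Y" unfolding S1_def by auto
        thus ?thesis using Y SE unfolding S1_def deletion_def by auto
      qed
    qed
  qed
  have part2: "deletable E S e \<Longrightarrow>
           (coloop E S e \<longrightarrow> real (card (deletion E S e)) = real (card S) / 2) \<and>
           (\<not> coloop E S e \<longrightarrow> card (deletion E S e) = card S)"
  proof -
    assume del: "deletable E S e"
    have gd: "\<And>X. X \<subseteq> E - {e} \<Longrightarrow> real (del_g S e X) / real (del_g S e {}) \<in> {0, 1}"
      using del unfolding deletable_def by auto
    have g0: "del_g S e {} = 1 \<or> del_g S e {} = 2"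
      using emp unfolding del_g_def ind_ps_def by auto
    show ?thesis
    proof (cases "del_g S e {} = 1")
      case True
      have nb: "\<And>X. X \<subseteq> E - {e} \<Longrightarrow> \<not> (X \<in> S \<and> X \<union> {e} \<in> S)"
      proof -
        fix X assume "X \<subseteq> E - {e}"
        from gd[OF this] True have "del_g S e X \<le> 1" by auto
        thus "\<not> (X \<in> S \<and> X \<union> {e} \<in> S)" unfolding del_g_def ind_ps_def by auto
      qed
      have ncl: "\<not> coloop E S e"
      proof
        assume "coloop E S e"
        then obtain T where T: "T \<subseteq> Pow (E - {e})" "S = {Z. \<exists>X\<in>T. Z = X \<or> Z = X \<union> {e}}"
          unfolding coloop_def by auto
        from emp T obtain X where "X \<in> T" "{} = X \<or> {} = X \<union> {e}" by auto
        hence "{} \<in> T" by auto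
        hence "{e} \<in> S" using T by auto
        thus False using nb[of "{}"] emp by auto
      qed
      have disj: "S0 \<inter> (\<lambda>Y. Y - {e}) ` S1 = {}"
      proof (rule ccontr)
        assume "S0 \<inter> (\<lambda>Y. Y - {e}) ` S1 \<noteq> {}"
        then obtain Y where Y: "Y \<in> S1" "Y - {e} \<in> S0" by auto
        have "(Y - {e}) \<union> {e} = Y" using Y unfolding S1_def by auto
        moreover have "Y - {e} \<subseteq> E - {e}" using Y SE unfolding S1_def by auto
        ultimately show False using nb[of "Y - {e}"] Y unfolding S0_def S1_def by auto
      qed
      have "card (deletion E S e) = card S0 + card ((\<lambda>Y. Y - {e}) ` S1)"
        unfolding D using disj fS0 by (simp add: card_Un_disjoint)
      also have "\<dots> = card S" using cS card_image[OF inj] by simp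
      finally show ?thesis using ncl by simp
    next
      case False
      hence two: "del_g S e {} = 2" using g0 by auto
      have eq: "\<And>X. X \<subseteq> E - {e} \<Longrightarrow> (X \<in> S \<longleftrightarrow> X \<union> {e} \<in> S)"
      proof -
        fix X assume "X \<subseteq> E - {e}"
        from gd[OF this] two have "del_g S e X = 0 \<or> del_g S e X = 2" by auto
        thus "(X \<in> S \<longleftrightarrow> X \<union> {e} \<in> S)" unfolding del_g_def ind_ps_def
          by (auto split: if_splits)
      qed
      have im: "(\<lambda>Y. Y - {e}) ` S1 = S0"
      proof
        show "(\<lambda>Y. Y - {e}) ` S1 \<subseteq> S0"
        proof
          fix X assume "X \<in> (\<lambda>Y. Y - {e}) ` S1"
          then obtain Y where Y: "Y \<in> S1" "X = Y - {e}" by auto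
          hence "X \<union> {e} = Y" unfolding S1_def by auto
          moreover have "X \<subseteq> E - {e}" using Y SE unfolding S1_def by auto
          ultimately show "X \<in> S0" using eq[of X] Y unfolding S0_def S1_def by auto
        qed
      next
        show "S0 \<subseteq> (\<lambda>Y. Y - {e}) ` S1"
        proof
          fix X assume X: "X \<in> S0"
          hence "X \<subseteq> E - {e}" using SE unfolding S0_def by auto
          hence "X \<union> {e} \<in> S1" using eq[of X] X unfolding S0_def S1_def by auto
          moreover have "X = (X \<union> {e}) - {e}" using X unfolding S0_def by auto
          ultimately show "X \<in> (\<lambda>Y. Y - {e}) ` S1" by blast
        qed
      qed
      have cD: "card (deletion E S e) = card S0" using D im by simp
      have c1: "card S1 = card S0" using card_image[OF inj] im by simp
      have cl: "coloop E S e"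
        unfolding coloop_def
      proof (intro exI conjI)
        show "S0 \<subseteq> Pow (E - {e})" using SE unfolding S0_def by auto
        show "S = {Z. \<exists>X\<in>S0. Z = X \<or> Z = X \<union> {e}}"
        proof
          show "S \<subseteq> {Z. \<exists>X\<in>S0. Z = X \<or> Z = X \<union> {e}}"
          proof
            fix Z assume Z: "Z \<in> S"
            show "Z \<in> {Z. \<exists>X\<in>S0. Z = X \<or> Z = X \<union> {e}}"
            proof (cases "e \<in> Z")
              case True
              hence "Z \<in> S1" using Z unfolding S1_def by auto
              hence "Z - {e} \<in> S0" using im by blast
              moreover have "Z = (Z - {e}) \<union> {e}" using True by auto
              ultimately show ?thesis by blast
            next
              case False thus ?thesis using Z unfolding S0_def by auto
            qed
          qed
        next
          show "{Z. \<exists>X\<in>S0. Z = X \<or> Z = X \<union> {e}} \<subseteq> S"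
          proof
            fix Z assume "Z \<in> {Z. \<exists>X\<in>S0. Z = X \<or> Z = X \<union> {e}}"
            then obtain X where X: "X \<in> S0" "Z = X \<or> Z = X \<union> {e}" by auto
            have "X \<subseteq> E - {e}" using X SE unfolding S0_def by auto
            thus "Z \<in> S" using eq[of X] X unfolding S0_def by auto
          qed
        qed
      qed
      show ?thesis using cl cD c1 cS by simp
    qed
  qed
  show ?thesis using part1 part2 by blast
qed

end
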